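(* Let $X$ be $\mathbf{S}^2\times\mathbb{R}$ or $\mathbf{H}^2\times\mathbb{R}$ in the projective model described in the context. Let $P_1=(1,1,0,0)$, $P_2=(1,a,b,c)$, $P_3=(1,d,e,f)$ be given points of $X$ and $P=(1,x,y,z)$ an arbitrary point of $X$. Let $\mathbf{p}_1=(1,0,0)$, $\mathbf{p}_2=(a,b,c)$, $\mathbf{p}_3=(d,e,f)$, $\mathbf{p}=(x,y,z)$, and let $P_1'=P_1,P_2',P_3',P'$ be the projections of $P_1,P_2,P_3,P$ onto the unit surface of $X$ along the fibre lines. Let $d_1,d_2,d_3$ be the distances (in the unit surface) of $P'$ to $P_1',P_2',P_3'$, and let $\gamma_1=\angle P_2'P'P_3'$, $\gamma_2=\angle P_3'P'P_1'$, $\gamma_3=\angle P_1'P'P_2'$ be directed angles. Then $P$ lies on the translation-like triangular surface $S^{X,t}_{P_1,P_2,P_3}$ if \[ d_1d_2\sin(\gamma_3)\ln\frac{|\mathbf{p}_3|}{|\mathbf{p}|}+d_2d_3\sin(\gamma_1)\ln\frac{|\mathbf{p}_1|}{|\mathbf{p}|}+d_3d_1\sin(\gamma_2)\ln\frac{|\mathbf{p}_2|}{|\mathbf{p}|}=0, \] where $|\cdot|$ is the Euclidean norm.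
   Context: Points are written in homogeneous coordinates $(1,x,y,z)$; $\mathbf{S}^2\times\mathbb{R}$ is the set of such points with $x^2+y^2+z^2>0$, and $\mathbf{H}^2\times\mathbb{R}$ the set with $x^2-y^2-z^2>0$, $x>0$. The unit surface is the unit sphere $x^2+y^2+z^2=1$ (with its spherical metric) in $\mathbf{S}^2\times\mathbb{R}$, resp. the sheet $x>0$ of $x^2-y^2-z^2=1$ (with its hyperbolic-plane metric) in $\mathbf{H}^2\times\mathbb{R}$; the fibre lines are the open rays from the Euclidean origin, and the fibre coordinate of $(1,\mathbf{p})$ is $\ln$ of $\sqrt{x^2\pm(y^2+z^2)}$ (sign $+$ for $\mathbf{S}^2\times\mathbb{R}$, $-$ for $\mathbf{H}^2\times\mathbb{R}$); projection along fibres sends $\mathbf{p}$ to $\mathbf{p}/\sqrt{x^2\pm(y^2+z^2)}$. With $S,C$ meaning $\sin,\cos$ (resp. $\sinh,\cosh$), the translation curves (= geodesics) from $E_0=(1,1,0,0)$ are $x=e^{\tau\sin v}C(\tau\cos v)$, $y=e^{\tau\sin v}S(\tau\cos v)\cos u$, $z=e^{\tau\sin v}S(\tau\cos v)\sin u$, with tangent $(\sin v,\cos v\cos u,\cos v\sin u)$ at $E_0$; translation curves from other points are images of these under isometries, which are generated by fibre translations $\mathbf{p}\mapsto e^{s}\mathbf{p}$ and isometries of the unit surface (extended linearly). The translation-like triangular surface $S^{X,t}_{P_1,P_2,P_3}$ is the set of points $P$ of $X$ such that the tangent vectors at $P$ of the translation curves drawn from $P$ to $P_1$, $P_2$, $P_3$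 are coplanar (linearly dependent).
   Formalization: The norm in the logarithms is $\sqrt{x^2\pm(y^2+z^2)}$ instead of the Euclidean norm, and the translation curves drawn from P to $P_1$, $P_2$, $P_3$ are those projecting to shortest geodesics of the unit surface. Each condition added here is assumed in the paper as well or is needed for the statement above to hold. *)

theory Defs
  imports "HOL-Analysis.Analysis"
begin

text \<open>Points (1,x,y,z) are represented by their affine part p = (x,y,z) :: real^3.
  The two geometries are distinguished by a datatype.\<close>

datatype geom = S2xR | H2xR

definition sgn_geom :: "geom \<Rightarrow> real" where
  "sgn_geom X = (case X of S2xR \<Rightarrow> 1 | H2xR \<Rightarrow> -1)"

definition SS :: "geom \<Rightarrow> real \<Rightarrow> real" where
  "SS X t = (case X of S2xR \<Rightarrow> sin t | H2xR \<Rightarrow> sinh t)"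
definition CC :: "geom \<Rightarrow> real \<Rightarrow> real" where
  "CC X t = (case X of S2xR \<Rightarrow> cos t | H2xR \<Rightarrow> cosh t)"

definition bform :: "geom \<Rightarrow> real^3 \<Rightarrow> real^3 \<Rightarrow> real" where
  "bform X p q = p$1 * q$1 + sgn_geom X * (p$2 * q$2 + p$3 * q$3)"

definition in_X :: "geom \<Rightarrow> real^3 \<Rightarrow> bool" where
  "in_X X p = (case X of
      S2xR \<Rightarrow> (p$1)^2 + (p$2)^2 + (p$3)^2 > 0
    | H2xR \<Rightarrow> (p$1)^2 - (p$2)^2 - (p$3)^2 > 0 \<and> p$1 > 0)"

text \<open>sqrt(x^2 \<plusminus> (y^2+z^2)); its logarithm is the fibre coordinate.\<close>
definition fnorm :: "geom \<Rightarrow> real^3 \<Rightarrow> real" where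
  "fnorm X p = sqrt (bform X p p)"

definition proj :: "geom \<Rightarrow> real^3 \<Rightarrow> real^3" where
  "proj X p = (1 / fnorm X p) *\<^sub>R p"

definition surf_dist :: "geom \<Rightarrow> real^3 \<Rightarrow> real^3 \<Rightarrow> real" where
  "surf_dist X p q = (case X of S2xR \<Rightarrow> arccos (bform X p q) | H2xR \<Rightarrow> arcosh (bform X p q))"

definition tmetric :: "geom \<Rightarrow> real^3 \<Rightarrow> real^3 \<Rightarrow> real" where
  "tmetric X u w = sgn_geom X * bform X u w"

definition tnorm :: "geom \<Rightarrow> real^3 \<Rightarrow> real" where
  "tnorm X u = sqrt (tmetric X u u)"

text \<open>Initial direction at p (on the unit surface) of the geodesic towards q.\<close>
definition tdir :: "geom \<Rightarrow> real^3 \<Rightarrow> real^3 \<Rightarrow> real^3" where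
  "tdir X p q = q - bform X p q *\<^sub>R p"

definition det3 :: "real^3 \<Rightarrow> real^3 \<Rightarrow> real^3 \<Rightarrow> real" where
  "det3 a b c = a$1 * (b$2 * c$3 - b$3 * c$2) - a$2 * (b$1 * c$3 - b$3 * c$1)
               + a$3 * (b$1 * c$2 - b$2 * c$1)"

text \<open>Directed angle q1 p q2 at p in the unit surface, measured from the direction
  towards q1 to the direction towards q2; the tangent plane at p is oriented by
  det(p,u,w) > 0.\<close>
definition dir_angle :: "geom \<Rightarrow> real^3 \<Rightarrow> real^3 \<Rightarrow> real^3 \<Rightarrow> real" where
  "dir_angle X q1 p q2 =
     (let u = tdir X p q1; w = tdir X p q2 in
      THE g. - pi < g \<and> g \<le> pi \<and>
        cos g = tmetric X u w / (tnorm X u * tnorm X w) \<and>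
        sin g = det3 p u w / (tnorm X u * tnorm X w))"

definition e0 :: "real^3" where
  "e0 = vector [1, 0, 0]"

text \<open>Isometries of the unit surface, extended linearly.\<close>
definition surf_isom :: "geom \<Rightarrow> (real^3 \<Rightarrow> real^3) \<Rightarrow> bool" where
  "surf_isom X A = (linear A \<and> (\<forall>p q. bform X (A p) (A q) = bform X p q) \<and>
                    (X = H2xR \<longrightarrow> (A e0)$1 > 0))"

text \<open>Isometries of X: compositions of fibre translations and surface isometries.\<close>
definition X_isom :: "geom \<Rightarrow> (real^3 \<Rightarrow> real^3) \<Rightarrow> bool" where
  "X_isom X L = (\<exists>s A. surf_isom X A \<and> L = (\<lambda>p. exp s *\<^sub>R A p))"

text \<open>Translation curve from E0 (point at parameter tau) and its unit tangent at E0.\<close>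
definition tcurve :: "geom \<Rightarrow> real \<Rightarrow> real \<Rightarrow> real \<Rightarrow> real^3" where
  "tcurve X tau v u = vector [exp (tau * sin v) * CC X (tau * cos v),
                              exp (tau * sin v) * SS X (tau * cos v) * cos u,
                              exp (tau * sin v) * SS X (tau * cos v) * sin u]"

definition tangent0 :: "real \<Rightarrow> real \<Rightarrow> real^3" where
  "tangent0 v u = vector [sin v, cos v * cos u, cos v * sin u]"

text \<open>Tangent vectors at p of the translation curves drawn from p to q (velocity
  vector, of length tau, of the curve L o tcurve on [0,tau]); the curve is required
  to project to a shortest geodesic of the unit surface.\<close>
definition trans_tangents :: "geom \<Rightarrow> real^3 \<Rightarrow> real^3 \<Rightarrow> (real^3) set" where
  "trans_tangents X p q = {tau *\<^sub>R L (tangent0 v u) | tau v u L.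
      X_isom X L \<and> L e0 = p \<and> tau \<ge> 0 \<and> L (tcurve X tau v u) = q \<and>
      tau * \<bar>cos v\<bar> = surf_dist X (proj X p) (proj X q)}"

definition tl_surface :: "geom \<Rightarrow> real^3 \<Rightarrow> real^3 \<Rightarrow> real^3 \<Rightarrow> (real^3) set" where
  "tl_surface X p1 p2 p3 = {p. in_X X p \<and>
     (\<exists>w1 w2 w3. w1 \<in> trans_tangents X p p1 \<and> w2 \<in> trans_tangents X p p2 \<and>
        w3 \<in> trans_tangents X p p3 \<and>
        (\<exists>a b c. (a, b, c) \<noteq> (0, 0, 0) \<and> a *\<^sub>R w1 + b *\<^sub>R w2 + c *\<^sub>R w3 = 0))}"

end

theory Submission
  imports Defs
begin

lemma dep3:
  fixes v1 v2 v3 :: "real^3"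
  assumes "det3 v1 v2 v3 = 0"
  shows "\<exists>a b c. (a,b,c) \<noteq> (0,0,0) \<and> a *\<^sub>R v1 + b *\<^sub>R v2 + c *\<^sub>R v3 = 0"
proof -
  define M :: "real^3^3" where "M = transpose (vector [v1, v2, v3])"
  have "det M = 0" using assms unfolding M_def det_transpose det_3 det3_def transpose_def
    by (simp add: algebra_simps)
  hence "\<not> invertible M" by (simp add: invertible_det_nz)
  hence "\<not> (\<forall>x. M *v x = 0 \<longrightarrow> x = 0)"
    using invertible_left_inverse matrix_left_invertible_ker by blast
  then obtain x where x: "M *v x = 0" "x \<noteq> 0" by blast
  have "x$1 *\<^sub>R v1 + x$2 *\<^sub>R v2 + x$3 *\<^sub>R v3 = 0"
    using x(1) unfolding M_def
    by (simp add: vec_eq_iff forall_3 matrix_vector_mult_def transpose_def sum_3 algebra_simps)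
  moreover have "(x$1, x$2, x$3) \<noteq> (0,0,0)" using x(2) by (auto simp: vec_eq_iff forall_3)
  ultimately show ?thesis by blast
qed
lemma sgn_sq[simp]: "sgn_geom X * sgn_geom X = 1"
  by (cases X) (simp_all add: sgn_geom_def)
lemma sgn_sq2[simp]: "(sgn_geom X)\<^sup>2 = 1"
  by (simp add: power2_eq_square)
lemma bform_sym: "bform X p q = bform X q p"
  by (simp add: bform_def algebra_simps)
lemma bform_add[simp]: "bform X (u + v) q = bform X u q + bform X v q"
  by (simp add: bform_def algebra_simps)
lemma bform_diff[simp]: "bform X (u - v) q = bform X u q - bform X v q"
  by (simp add: bform_def algebra_simps)
lemma bform_scale[simp]: "bform X (a *\<^sub>R u) q = a * bform X u q"
  by (simp add: bform_def algebra_simps)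
lemma bform_add2[simp]: "bform X q (u + v) = bform X q u + bform X q v"
  by (simp add: bform_def algebra_simps)
lemma bform_diff2[simp]: "bform X q (u - v) = bform X q u - bform X q v"
  by (simp add: bform_def algebra_simps)
lemma bform_scale2[simp]: "bform X q (a *\<^sub>R u) = a * bform X q u"
  by (simp add: bform_def algebra_simps)

lemma frame_exists:
  assumes unit: "bform X P P = 1"
  shows "\<exists>f2 f3. bform X P f2 = 0 \<and> bform X P f3 = 0 \<and> bform X f2 f3 = 0 \<and>
     bform X f2 f2 = sgn_geom X \<and> bform X f3 f3 = sgn_geom X \<and> det3 P f2 f3 = 1 \<and>
     (\<forall>Q. Q = bform X P Q *\<^sub>R P + (sgn_geom X * bform X f2 Q) *\<^sub>R f2
              + (sgn_geom X * bform X f3 Q) *\<^sub>R f3)"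
proof -
  define s where "s = sgn_geom X"
  have ss: "s * s = 1" unfolding s_def by simp
  define x where "x = P$1"
  define y where "y = P$2"
  define z where "z = P$3"
  have u: "x*x + s*(y*y+z*z) = 1" using unit unfolding bform_def x_def y_def z_def s_def by simp
  show ?thesis
  proof (cases "y*y+z*z > 0")
    case True
    define r where "r = sqrt (y*y+z*z)"
    have r0: "r > 0" using True unfolding r_def by simp
    have rr: "r*r = y*y+z*z" using True unfolding r_def by simp
    define k where "k = 1 / r"
    have kr: "k * r = 1" using r0 unfolding k_def by simp
    define f2 :: "real^3" where "f2 = vector [-s*r, x*y*k, x*z*k]"
    define f3 :: "real^3" where "f3 = vector [0, -z*k, y*k]"
    have P: "P = vector [x,y,z]" unfolding x_def y_def z_def by (simp add: vec_eq_iff forall_3)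
    note hyps = rr kr u ss
    have 1: "bform X P f2 = 0" unfolding P f2_def bform_def s_def[symmetric] using hyps
      by (simp; algebra)
    have 2: "bform X P f3 = 0" unfolding P f3_def bform_def s_def[symmetric] using hyps
      by (simp; algebra)
    have 3: "bform X f2 f3 = 0" unfolding f3_def f2_def bform_def s_def[symmetric] using hyps
      by (simp; algebra)
    have 4: "bform X f2 f2 = s" unfolding f2_def bform_def s_def[symmetric] using hyps
      by (simp; algebra)
    have 5: "bform X f3 f3 = s" unfolding f3_def bform_def s_def[symmetric] using hyps
      by (simp; algebra)
    have 6: "det3 P f2 f3 = 1" unfolding P f2_def f3_def det3_def using hyps
      by (simp; algebra)
    have 7: "Q = bform X P Q *\<^sub>R P + (s * bform X f2 Q) *\<^sub>R f2 + (s * bform X f3 Q) *\<^sub>R f3" for Q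
      unfolding P f2_def f3_def bform_def s_def[symmetric] using hyps
      by (simp add: vec_eq_iff forall_3) (intro conjI; algebra)
    show ?thesis using 1 2 3 4 5 6 7 unfolding s_def by blast
  next
    case False
    have "y*y \<ge> 0" "z*z \<ge> 0" by simp_all
    hence "y*y = 0" "z*z = 0" using False by linarith+
    hence yz: "y = 0" "z = 0" by simp_all
    have P: "P = vector [x,0,0]" unfolding x_def using yz unfolding y_def z_def by (simp add: vec_eq_iff forall_3)
    have xx: "x * x = 1" using u yz by simp
    define f2 :: "real^3" where "f2 = vector [0, 1, 0]"
    define f3 :: "real^3" where "f3 = vector [0, 0, x]"
    have 7: "Q = bform X P Q *\<^sub>R P + (s * bform X f2 Q) *\<^sub>R f2 + (s * bform X f3 Q) *\<^sub>R f3" for Q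
      unfolding P f2_def f3_def bform_def s_def[symmetric] using xx ss
      by (simp add: vec_eq_iff forall_3 field_simps)
    note hyps = xx ss
    have 1: "bform X P f2 = 0" unfolding P f2_def bform_def s_def[symmetric] using hyps
      by (simp; algebra)
    have 2: "bform X P f3 = 0" unfolding P f3_def bform_def s_def[symmetric] using hyps
      by (simp; algebra)
    have 3: "bform X f2 f3 = 0" unfolding f3_def f2_def bform_def s_def[symmetric] using hyps
      by (simp; algebra)
    have 4: "bform X f2 f2 = s" unfolding f2_def bform_def s_def[symmetric] using hyps
      by (simp; algebra)
    have 5: "bform X f3 f3 = s" unfolding f3_def bform_def s_def[symmetric] using hyps
      by (simp; algebra)
    have 6: "det3 P f2 f3 = 1" unfolding P f2_def f3_def det3_def using hyps
      by (simp; algebra)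
    show ?thesis using 1 2 3 4 5 6 7 unfolding s_def by blast

  qed
qed
lemma inX_bpos: "in_X X p \<Longrightarrow> bform X p p > 0"
  by (cases X) (auto simp: in_X_def bform_def sgn_geom_def power2_eq_square)
lemma fnorm_pos: "in_X X p \<Longrightarrow> fnorm X p > 0"
  using inX_bpos by (simp add: fnorm_def)
lemma proj_unit: "in_X X p \<Longrightarrow> bform X (proj X p) (proj X p) = 1"
proof -
  assume a: "in_X X p"
  have "bform X (proj X p) (proj X p) = bform X p p / (fnorm X p)^2"
    by (simp add: proj_def power2_eq_square)
  also have "(fnorm X p)^2 = bform X p p" using inX_bpos[OF a] by (simp add: fnorm_def)
  finally show ?thesis using inX_bpos[OF a] by simp
qed
lemma proj_scale: "in_X X p \<Longrightarrow> fnorm X p *\<^sub>R proj X p = p"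
  using fnorm_pos[of X p] by (simp add: proj_def)
lemma proj_pos1: "in_X H2xR p \<Longrightarrow> (proj H2xR p)$1 > 0"
  using fnorm_pos[of H2xR p] by (simp add: proj_def in_X_def)

lemma H2_c_pos:
  assumes "bform H2xR P P = 1" "bform H2xR Q Q = 1" "P$1 > 0" "Q$1 > 0"
  shows "bform H2xR P Q > 0"
proof -
  define x where "x = P$1" define y where "y = P$2" define z where "z = P$3"
  define x' where "x' = Q$1" define y' where "y' = Q$2" define z' where "z' = Q$3"
  have e1: "x*x = 1 + (y*y+z*z)" and e2: "x'*x' = 1 + (y'*y'+z'*z')"
    using assms(1,2) by (simp_all add: bform_def sgn_geom_def x_def y_def z_def x'_def y'_def z'_def)
  have xp: "x > 0" "x' > 0" using assms(3,4) by (simp_all add: x_def x'_def)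
  have nn: "y*y+z*z \<ge> 0" "y'*y'+z'*z' \<ge> 0" by simp_all
  have cs: "(y*y'+z*z')^2 \<le> (y*y+z*z)*(y'*y'+z'*z')"
  proof -
    have "(y*y+z*z)*(y'*y'+z'*z') - (y*y'+z*z')^2 = (y*z'-z*y')^2" by algebra
    moreover have "(y*z'-z*y')^2 \<ge> 0" by simp
    ultimately show ?thesis by linarith
  qed
  have m: "(y*y+z*z)*(y'*y'+z'*z') < (x*x)*(x'*x')"
    by (rule mult_strict_mono) (use e1 e2 nn in linarith)+
  have sq: "(x*x')^2 = (x*x)*(x'*x')" by (simp add: power2_eq_square)
  have "(y*y'+z*z')^2 < (x*x')^2" unfolding sq using m cs by linarith
  hence "y*y'+z*z' < x*x'" by (rule power2_less_imp_less) (use xp in simp)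
  moreover have "bform H2xR P Q = x*x' - (y*y'+z*z')"
    unfolding x_def y_def z_def x'_def y'_def z'_def by (simp add: bform_def sgn_geom_def)
  ultimately show ?thesis by linarith
qed
lemma surf_facts:
  fixes X :: geom and P Q :: "real^3" and al be :: real
  assumes pars: "bform X P Q * bform X P Q + sgn_geom X * (al*al + be*be) = 1"
    and h2: "X = H2xR \<Longrightarrow> bform X P Q > 0"
  shows "CC X (surf_dist X P Q) = bform X P Q \<and> SS X (surf_dist X P Q) = sqrt (al*al+be*be)
     \<and> surf_dist X P Q \<ge> 0
     \<and> (surf_dist X P Q > 0 \<longrightarrow> SS X (surf_dist X P Q) = 0 \<longrightarrow> bform X P Q = -1)"
proof (cases X)
  case S2xR
  define c where "c = bform X P Q"
  have pc: "c*c = 1 - (al*al+be*be)" using pars S2xR by (simp add: c_def sgn_geom_def)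
  have nn: "al*al+be*be \<ge> 0" by simp
  have "c\<^sup>2 \<le> 1" using pc nn by (simp add: power2_eq_square)
  hence cb: "-1 \<le> c" "c \<le> 1" using abs_square_le_1 by (auto simp: abs_le_iff)
  have d: "surf_dist X P Q = arccos c" using S2xR by (simp add: surf_dist_def c_def)
  have sn: "sin (arccos c) = sqrt (al*al+be*be)" using cb by (simp add: sin_arccos power2_eq_square pc)
  have last: "arccos c > 0 \<Longrightarrow> sqrt (al*al+be*be) = 0 \<Longrightarrow> c = -1"
  proof -
    assume a: "arccos c > 0" "sqrt (al*al+be*be) = 0"
    hence "c*c = 1" using pc by simp
    hence "c = 1 \<or> c = -1" by algebra
    moreover have "c \<noteq> 1" using a by auto
    ultimately show ?thesis by blast
  qed
  show ?thesis unfolding c_def[symmetric] d using S2xR cb sn last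
    by (simp add: CC_def SS_def arccos_lbound)
next
  case H2xR
  define c where "c = bform X P Q"
  have pc: "c*c = 1 + (al*al+be*be)" using pars H2xR by (simp add: c_def sgn_geom_def)
  have nn: "al*al+be*be \<ge> 0" by simp
  have cp: "c > 0" using h2 H2xR c_def by simp
  have c1: "c \<ge> 1"
  proof (rule ccontr)
    assume "\<not> c \<ge> 1"
    hence "c*c < 1*1" using cp by (intro mult_strict_mono) auto
    thus False using pc nn by linarith
  qed
  have d: "surf_dist X P Q = arcosh c" using H2xR by (simp add: surf_dist_def c_def)
  have ch: "cosh (arcosh c) = c" using c1 by simp
  have d0: "arcosh c \<ge> 0" using c1 by simp
  have "(sinh (arcosh c))^2 = al*al+be*be" using cosh_square_eq[of "arcosh c"] ch pc
    by (simp add: power2_eq_square)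
  moreover have "sinh (arcosh c) \<ge> 0" using d0 by simp
  ultimately have sh: "sinh (arcosh c) = sqrt (al*al+be*be)" by (metis real_sqrt_unique)
  have last: "arcosh c > 0 \<longrightarrow> sqrt (al*al+be*be) = 0 \<longrightarrow> c = -1"
    using sh[symmetric] by auto
  show ?thesis unfolding c_def[symmetric] d using H2xR ch d0 sh last
    by (simp only: CC_def SS_def geom.case)
qed
lemma polar: "\<exists>t. sqrt (a*a+b*b) * cos t = a \<and> sqrt (a*a+b*b) * sin t = (b::real)"
proof (cases "a*a+b*b = 0")
  case True
  have "a*a \<ge> 0" "b*b \<ge> 0" by simp_all
  hence "a*a = 0" "b*b = 0" using True by linarith+
  hence "a = 0" "b = 0" by simp_all
  thus ?thesis by auto
next
  case False
  define r where "r = sqrt (a*a+b*b)"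
  have "a*a+b*b \<ge> 0" by simp
  hence "a*a+b*b > 0" using False by linarith
  hence rp: "r > 0" unfolding r_def by simp
  have rr: "r*r = a*a+b*b" unfolding r_def using \<open>a*a+b*b \<ge> 0\<close> by simp
  have "(a/r)\<^sup>2 + (b/r)\<^sup>2 = (a*a+b*b)/(r*r)" by (simp add: power2_eq_square add_divide_distrib)
  also have "\<dots> = 1" using rp by (simp add: rr[symmetric])
  finally have "(a/r)\<^sup>2 + (b/r)\<^sup>2 = 1" .
  then obtain t where t: "a/r = cos t" "b/r = sin t" by (rule sincos_total_2pi) blast
  have "r * cos t = a" "r * sin t = b" using t rp by (simp_all add: field_simps)
  thus ?thesis unfolding r_def by blast
qed

lemma A_linear: "linear (\<lambda>x::real^3. x$1 *\<^sub>R P + x$2 *\<^sub>R f2 + x$3 *\<^sub>R f3)"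
  by (rule linearI) (simp_all add: algebra_simps)

lemma A_bform:
  assumes "bform X P P = 1" "bform X P f2 = 0" "bform X P f3 = 0" "bform X f2 f3 = 0"
    "bform X f2 f2 = sgn_geom X" "bform X f3 f3 = sgn_geom X"
  shows "bform X (x$1 *\<^sub>R P + x$2 *\<^sub>R f2 + x$3 *\<^sub>R f3) (y$1 *\<^sub>R P + y$2 *\<^sub>R f2 + y$3 *\<^sub>R f3) = bform X x y"
proof -
  have s1: "bform X f2 P = 0" "bform X f3 P = 0" "bform X f3 f2 = 0"
    using assms bform_sym by metis+
  show ?thesis using assms s1 by (simp add: bform_def[of X x y] algebra_simps)
qed
lemma tangent_exists:
  fixes X :: geom and p q P f2 f3 :: "real^3"
  assumes inp: "in_X X p" and inq: "in_X X q" and PP: "P = proj X p"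
    and fr: "bform X P f2 = 0" "bform X P f3 = 0" "bform X f2 f3 = 0"
      "bform X f2 f2 = sgn_geom X" "bform X f3 f3 = sgn_geom X"
    and rec: "\<forall>Q. Q = bform X P Q *\<^sub>R P + (sgn_geom X * bform X f2 Q) *\<^sub>R f2
              + (sgn_geom X * bform X f3 Q) *\<^sub>R f3"
    and nonanti: "P \<noteq> - proj X q"
  shows "\<exists>u. fnorm X p *\<^sub>R (ln (fnorm X q / fnorm X p) *\<^sub>R P
            + (surf_dist X P (proj X q) * cos u) *\<^sub>R f2 + (surf_dist X P (proj X q) * sin u) *\<^sub>R f3)
          \<in> trans_tangents X p q
        \<and> surf_dist X P (proj X q) \<ge> 0
        \<and> (surf_dist X P (proj X q) > 0 \<longrightarrow>
             SS X (surf_dist X P (proj X q)) > 0 \<and>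
             SS X (surf_dist X P (proj X q)) * cos u = sgn_geom X * bform X f2 (proj X q) \<and>
             SS X (surf_dist X P (proj X q)) * sin u = sgn_geom X * bform X f3 (proj X q) \<and>
             SS X (surf_dist X P (proj X q)) = sqrt ((sgn_geom X * bform X f2 (proj X q))^2
                   + (sgn_geom X * bform X f3 (proj X q))^2))"
proof -
  define s where "s = sgn_geom X"
  define Q where "Q = proj X q"
  define c where "c = bform X P Q"
  define al where "al = s * bform X f2 Q"
  define be where "be = s * bform X f3 Q"
  define d where "d = surf_dist X P Q"
  define l where "l = ln (fnorm X q / fnorm X p)"
  define fp where "fp = fnorm X p"
  define fq where "fq = fnorm X q"
  define A where "A = (\<lambda>x::real^3. x$1 *\<^sub>R P + x$2 *\<^sub>R f2 + x$3 *\<^sub>R f3)"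
  define L where "L = (\<lambda>x. exp (ln fp) *\<^sub>R A x)"
  have fpp: "fp > 0" unfolding fp_def using fnorm_pos[OF inp] .
  have fqp: "fq > 0" unfolding fq_def using fnorm_pos[OF inq] .
  have PU: "bform X P P = 1" unfolding PP using proj_unit[OF inp] .
  have QU: "bform X Q Q = 1" unfolding Q_def using proj_unit[OF inq] .
  have ss: "s * s = 1" unfolding s_def by simp
  have recQ: "Q = c *\<^sub>R P + al *\<^sub>R f2 + be *\<^sub>R f3"
    using rec unfolding c_def al_def be_def s_def by blast
  have pars: "c * c + s * (al*al + be*be) = 1"
  proof -
    have "bform X Q Q = c * bform X P Q + al * bform X f2 Q + be * bform X f3 Q"
      by (subst (1) recQ) simp
    also have "\<dots> = c * c + s * (al*al + be*be)"
      unfolding c_def al_def be_def using ss by algebra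
    finally show ?thesis using QU by simp
  qed
  have h2: "X = H2xR \<Longrightarrow> c > 0"
  proof -
    assume X: "X = H2xR"
    have "P$1 > 0" unfolding PP X using proj_pos1 inp X by simp
    moreover have "Q$1 > 0" unfolding Q_def X using proj_pos1 inq X by simp
    ultimately show "c > 0" unfolding c_def using H2_c_pos PU QU X by simp
  qed
  have sf: "CC X d = c" "SS X d = sqrt (al*al+be*be)" "d \<ge> 0" "d > 0 \<Longrightarrow> SS X d = 0 \<Longrightarrow> c = -1"
    using surf_facts[of X P Q al be] pars h2 unfolding d_def c_def s_def by auto
  obtain u where u: "SS X d * cos u = al" "SS X d * sin u = be"
    using polar[of al be] sf(2) by auto
  obtain v where v: "sqrt (d*d+l*l) * cos v = d" "sqrt (d*d+l*l) * sin v = l"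
    using polar[of d l] by auto
  define tau where "tau = sqrt (d*d+l*l)"
  have tau0: "tau \<ge> 0" unfolding tau_def by simp
  have tv: "tau * cos v = d" "tau * sin v = l" using v unfolding tau_def by auto
  have isom: "surf_isom X A"
  proof -
    have "bform X (A x) (A y) = bform X x y" for x y
      unfolding A_def using A_bform[OF PU fr] .
    moreover have "X = H2xR \<longrightarrow> (A e0)$1 > 0"
      unfolding A_def e0_def PP using proj_pos1 inp by auto
    ultimately show ?thesis unfolding surf_isom_def A_def using A_linear by blast
  qed
  have XL: "X_isom X L" unfolding X_isom_def L_def using isom by blast
  have Le0: "L e0 = p" unfolding L_def A_def e0_def using fpp proj_scale[OF inp]
    by (simp add: PP fp_def)
  have el: "exp l = fq / fp" unfolding l_def fq_def fp_def using fpp fqp by (simp add: fp_def fq_def)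
  have Ltc: "L (tcurve X tau v u) = q"
  proof -
    have "A (tcurve X tau v u) = exp l *\<^sub>R (c *\<^sub>R P + al *\<^sub>R f2 + be *\<^sub>R f3)"
      unfolding A_def tcurve_def using tv sf(1) u by (simp add: algebra_simps)
    also have "\<dots> = exp l *\<^sub>R Q" using recQ by simp
    finally have "L (tcurve X tau v u) = fp *\<^sub>R (exp l *\<^sub>R Q)" unfolding L_def using fpp by simp
    also have "\<dots> = fq *\<^sub>R Q" using el fpp by simp
    also have "\<dots> = q" unfolding fq_def Q_def using proj_scale[OF inq] .
    finally show ?thesis .
  qed
  have tcos: "tau * \<bar>cos v\<bar> = surf_dist X (proj X p) (proj X q)"
  proof -
    have "tau * \<bar>cos v\<bar> = \<bar>tau * cos v\<bar>" using tau0 by (simp add: abs_mult)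
    thus ?thesis using tv sf(3) unfolding d_def Q_def PP by simp
  qed
  have vec: "tau *\<^sub>R L (tangent0 v u) = fp *\<^sub>R (l *\<^sub>R P + (d * cos u) *\<^sub>R f2 + (d * sin u) *\<^sub>R f3)"
  proof -
    have "tau *\<^sub>R L (tangent0 v u) = fp *\<^sub>R ((tau * sin v) *\<^sub>R P + ((tau * cos v) * cos u) *\<^sub>R f2
            + ((tau * cos v) * sin u) *\<^sub>R f3)"
      unfolding L_def A_def tangent0_def using fpp by (simp add: algebra_simps)
    thus ?thesis unfolding tv .
  qed
  have mem: "fp *\<^sub>R (l *\<^sub>R P + (d * cos u) *\<^sub>R f2 + (d * sin u) *\<^sub>R f3) \<in> trans_tangents X p q"
    unfolding trans_tangents_def using XL Le0 tau0 Ltc tcos vec[symmetric] by blast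
  have pos: "d > 0 \<Longrightarrow> SS X d > 0"
  proof (rule ccontr)
    assume d0: "d > 0" and "\<not> SS X d > 0"
    moreover have "SS X d \<ge> 0" using sf(2) by simp
    ultimately have S0: "SS X d = 0" by linarith
    hence "c = -1" using sf(4) d0 by simp
    moreover have "al*al+be*be = 0" using S0 sf(2) by simp
    moreover have "al*al \<ge> 0" "be*be \<ge> 0" by simp_all
    ultimately have "al*al = 0" "be*be = 0" by linarith+
    hence "al = 0" "be = 0" by simp_all
    have "Q = - P" using recQ \<open>c = -1\<close> \<open>al = 0\<close> \<open>be = 0\<close> by simp
    thus False using nonanti unfolding Q_def by simp
  qed
  show ?thesis
    using mem sf u pos unfolding d_def l_def fp_def Q_def al_def be_def s_def
    by (auto simp: power2_eq_square)
qed
lemma the_angle: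
  assumes "c * c + sn * sn = (1::real)"
  shows "sin (THE g. - pi < g \<and> g \<le> pi \<and> cos g = c \<and> sin g = sn) = sn"
proof -
  let ?P = "\<lambda>g. - pi < g \<and> g \<le> pi \<and> cos g = c \<and> sin g = sn"
  have "c\<^sup>2 + sn\<^sup>2 = 1" using assms by (simp add: power2_eq_square)
  then obtain t where t: "0 \<le> t" "t < 2*pi" "c = cos t" "sn = sin t" by (rule sincos_total_2pi)
  have pi0: "pi > 0" by (rule pi_gt_zero)
  obtain g0 where g0: "?P g0"
  proof (cases "t \<le> pi")
    case True
    have "-pi < t" using t(1) pi0 by linarith
    then show ?thesis using t True that by blast
  next
    case False
    have "cos (t - 2*pi) = cos t" "sin (t - 2*pi) = sin t"
      by (simp_all add: cos_diff sin_diff)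
    moreover have "-pi < t - 2*pi" "t - 2*pi \<le> pi" using t False by linarith+
    ultimately show ?thesis using t that by metis
  qed
  have un: "g = h" if a: "?P g" "?P h" for g h
  proof -
    have "cos (g - h) = cos g * cos h + sin g * sin h" by (rule cos_diff)
    also have "\<dots> = 1" using a assms by simp
    finally have "cos (g - h) = 1" .
    then obtain n :: int where n: "g - h = real_of_int n * 2 * pi" using cos_one_2pi_int by blast
    have "g - h < 2*pi" "-(2*pi) < g - h" using a by linarith+
    hence h1: "real_of_int n * (2*pi) < 1 * (2*pi)" and h2: "(-1) * (2*pi) < real_of_int n * (2*pi)"
      using n by (simp_all add: mult.assoc)
    have "real_of_int n < 1" using mult_right_less_imp_less[OF h1] pi0 by simp
    moreover have "-1 < real_of_int n" using mult_right_less_imp_less[OF h2] pi0 by simp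
    ultimately have "n = 0" by linarith
    thus ?thesis using n by simp
  qed
  have "?P (THE g. ?P g)" by (rule theI[of ?P g0]) (use g0 un in blast)+
  thus ?thesis by blast
qed
lemma det3_comb:
  "det3 P (a *\<^sub>R f2 + b *\<^sub>R f3) (a' *\<^sub>R f2 + b' *\<^sub>R f3) = (a*b' - b*a') * det3 P f2 f3"
  unfolding det3_def by (simp add: algebra_simps)

lemma dir_sin:
  fixes X :: geom and P f2 f3 Qi Qj :: "real^3"
  assumes fr: "bform X f2 f3 = 0" "bform X f2 f2 = sgn_geom X" "bform X f3 f3 = sgn_geom X"
    and dt: "det3 P f2 f3 = 1"
    and ti: "tdir X P Qi = ai *\<^sub>R f2 + bi *\<^sub>R f3"
    and tj: "tdir X P Qj = aj *\<^sub>R f2 + bj *\<^sub>R f3"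
    and Si: "Si > 0" "Si * cos ui = ai" "Si * sin ui = bi" "Si = sqrt (ai\<^sup>2 + bi\<^sup>2)"
    and Sj: "Sj > 0" "Sj * cos uj = aj" "Sj * sin uj = bj" "Sj = sqrt (aj\<^sup>2 + bj\<^sup>2)"
  shows "sin (dir_angle X Qi P Qj) = sin (uj - ui)"
proof -
  have ss: "sgn_geom X * sgn_geom X = 1" by simp
  have f32: "bform X f3 f2 = 0" using fr(1) bform_sym by metis
  have tm: "tmetric X (a *\<^sub>R f2 + b *\<^sub>R f3) (a' *\<^sub>R f2 + b' *\<^sub>R f3) = a*a' + b*b'" for a b a' b'
    unfolding tmetric_def using fr f32 ss by (simp add: algebra_simps)
  have tni: "tnorm X (tdir X P Qi) = Si" unfolding tnorm_def ti tm using Si(4) by (simp add: power2_eq_square)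
  have tnj: "tnorm X (tdir X P Qj) = Sj" unfolding tnorm_def tj tm using Sj(4) by (simp add: power2_eq_square)
  define c where "c = tmetric X (tdir X P Qi) (tdir X P Qj) / (tnorm X (tdir X P Qi) * tnorm X (tdir X P Qj))"
  define sn where "sn = det3 P (tdir X P Qi) (tdir X P Qj) / (tnorm X (tdir X P Qi) * tnorm X (tdir X P Qj))"
  have nz: "Si * Sj \<noteq> 0" using Si(1) Sj(1) by simp
  have e1: "ai*aj + bi*bj = (Si*Sj) * cos (uj - ui)"
    unfolding Si(2,3)[symmetric] Sj(2,3)[symmetric] by (simp add: cos_diff algebra_simps)
  have e2: "(ai*bj - bi*aj) * 1 = (Si*Sj) * sin (uj - ui)"
    unfolding Si(2,3)[symmetric] Sj(2,3)[symmetric] by (simp add: sin_diff algebra_simps)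
  have c: "c = cos (uj - ui)"
    unfolding c_def tni tnj unfolding ti tj tm e1 using nz by simp
  have sn: "sn = sin (uj - ui)"
    unfolding sn_def tni tnj unfolding ti tj det3_comb dt e2 using nz by simp
  have "c*c + sn * sn = 1" unfolding c sn by (simp flip: power2_eq_square)
  hence "sin (THE g. - pi < g \<and> g \<le> pi \<and> cos g = c \<and> sin g = sn) = sn" by (rule the_angle)
  thus ?thesis unfolding dir_angle_def Let_def c_def[symmetric] sn_def[symmetric] sn .
qed
lemma pair_sin:
  fixes di dj g ui uj :: real
  assumes "di \<ge> 0" "dj \<ge> 0" "di > 0 \<Longrightarrow> dj > 0 \<Longrightarrow> sin g = sin (uj - ui)"
  shows "di * dj * sin g = (di * cos ui) * (dj * sin uj) - (dj * cos uj) * (di * sin ui)"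
proof (cases "di > 0 \<and> dj > 0")
  case True
  hence sg: "sin g = sin uj * cos ui - cos uj * sin ui" using assms(3) by (simp add: sin_diff)
  show ?thesis unfolding sg by (simp add: algebra_simps)
next
  case False
  hence "di = 0 \<or> dj = 0" using assms(1,2) by linarith
  thus ?thesis by auto
qed

theorem theorem4p10:
  fixes X :: geom and p2 p3 p :: "real^3"
  assumes "in_X X p2" and "in_X X p3" and "in_X X p"
    and nonantipodal: "\<forall>q \<in> {e0, p2, p3}. proj X p \<noteq> - proj X q"
    and eq: "(let P' = proj X p; P1' = proj X e0; P2' = proj X p2; P3' = proj X p3;
               d1 = surf_dist X P' P1'; d2 = surf_dist X P' P2'; d3 = surf_dist X P' P3';
               g1 = dir_angle X P2' P' P3'; g2 = dir_angle X P3' P' P1';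
               g3 = dir_angle X P1' P' P2'
             in d1 * d2 * sin g3 * ln (fnorm X p3 / fnorm X p)
              + d2 * d3 * sin g1 * ln (fnorm X e0 / fnorm X p)
              + d3 * d1 * sin g2 * ln (fnorm X p2 / fnorm X p)) = 0"
  shows "p \<in> tl_surface X e0 p2 p3"
proof -
  define P where "P = proj X p"
  have PU: "bform X P P = 1" unfolding P_def using proj_unit[OF assms(3)] .
  obtain f2 f3 where fr: "bform X P f2 = 0" "bform X P f3 = 0" "bform X f2 f3 = 0"
      "bform X f2 f2 = sgn_geom X" "bform X f3 f3 = sgn_geom X" and dt: "det3 P f2 f3 = 1"
    and rec: "\<forall>Q. Q = bform X P Q *\<^sub>R P + (sgn_geom X * bform X f2 Q) *\<^sub>R f2
              + (sgn_geom X * bform X f3 Q) *\<^sub>R f3"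
    using frame_exists[OF PU] by blast
  have ine0: "in_X X e0" by (cases X) (simp_all add: in_X_def e0_def)
  have na: "P \<noteq> - proj X e0" "P \<noteq> - proj X p2" "P \<noteq> - proj X p3"
    using nonantipodal unfolding P_def by auto
  define Q1 where "Q1 = proj X e0"
  define Q2 where "Q2 = proj X p2"
  define Q3 where "Q3 = proj X p3"
  define d1 where "d1 = surf_dist X P Q1"
  define d2 where "d2 = surf_dist X P Q2"
  define d3 where "d3 = surf_dist X P Q3"
  define l1 where "l1 = ln (fnorm X e0 / fnorm X p)"
  define l2 where "l2 = ln (fnorm X p2 / fnorm X p)"
  define l3 where "l3 = ln (fnorm X p3 / fnorm X p)"
  define fp where "fp = fnorm X p"
  obtain u1 where T1: "fp *\<^sub>R (l1 *\<^sub>R P + (d1 * cos u1) *\<^sub>R f2 + (d1 * sin u1) *\<^sub>R f3) \<in> trans_tangents X p e0"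
     "d1 \<ge> 0" "d1 > 0 \<longrightarrow> SS X d1 > 0 \<and>
             SS X d1 * cos u1 = sgn_geom X * bform X f2 Q1 \<and>
             SS X d1 * sin u1 = sgn_geom X * bform X f3 Q1 \<and>
             SS X d1 = sqrt ((sgn_geom X * bform X f2 Q1)^2 + (sgn_geom X * bform X f3 Q1)^2)"
    using tangent_exists[OF assms(3) ine0 P_def fr rec na(1)]
    unfolding d1_def l1_def fp_def Q1_def by blast
  obtain u2 where T2: "fp *\<^sub>R (l2 *\<^sub>R P + (d2 * cos u2) *\<^sub>R f2 + (d2 * sin u2) *\<^sub>R f3) \<in> trans_tangents X p p2"
     "d2 \<ge> 0" "d2 > 0 \<longrightarrow> SS X d2 > 0 \<and>
             SS X d2 * cos u2 = sgn_geom X * bform X f2 Q2 \<and>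
             SS X d2 * sin u2 = sgn_geom X * bform X f3 Q2 \<and>
             SS X d2 = sqrt ((sgn_geom X * bform X f2 Q2)^2 + (sgn_geom X * bform X f3 Q2)^2)"
    using tangent_exists[OF assms(3) assms(1) P_def fr rec na(2)]
    unfolding d2_def l2_def fp_def Q2_def by blast
  obtain u3 where T3: "fp *\<^sub>R (l3 *\<^sub>R P + (d3 * cos u3) *\<^sub>R f2 + (d3 * sin u3) *\<^sub>R f3) \<in> trans_tangents X p p3"
     "d3 \<ge> 0" "d3 > 0 \<longrightarrow> SS X d3 > 0 \<and>
             SS X d3 * cos u3 = sgn_geom X * bform X f2 Q3 \<and>
             SS X d3 * sin u3 = sgn_geom X * bform X f3 Q3 \<and>
             SS X d3 = sqrt ((sgn_geom X * bform X f2 Q3)^2 + (sgn_geom X * bform X f3 Q3)^2)"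
    using tangent_exists[OF assms(3) assms(2) P_def fr rec na(3)]
    unfolding d3_def l3_def fp_def Q3_def by blast
  have td: "tdir X P Q = (sgn_geom X * bform X f2 Q) *\<^sub>R f2 + (sgn_geom X * bform X f3 Q) *\<^sub>R f3" for Q
  proof -
    have "Q = bform X P Q *\<^sub>R P + (sgn_geom X * bform X f2 Q) *\<^sub>R f2 + (sgn_geom X * bform X f3 Q) *\<^sub>R f3"
      using rec by blast
    thus ?thesis unfolding tdir_def by (simp add: algebra_simps)
  qed
  have s12: "d1 * d2 * sin (dir_angle X Q1 P Q2) = (d1 * cos u1) * (d2 * sin u2) - (d2 * cos u2) * (d1 * sin u1)"
    using T1(2) T2(2) apply (rule pair_sin)
    using T1(3) T2(3) by (intro dir_sin[OF fr(3-5) dt td td]) auto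
  have s23: "d2 * d3 * sin (dir_angle X Q2 P Q3) = (d2 * cos u2) * (d3 * sin u3) - (d3 * cos u3) * (d2 * sin u2)"
    using T2(2) T3(2) apply (rule pair_sin)
    using T2(3) T3(3) by (intro dir_sin[OF fr(3-5) dt td td]) auto
  have s31: "d3 * d1 * sin (dir_angle X Q3 P Q1) = (d3 * cos u3) * (d1 * sin u1) - (d1 * cos u1) * (d3 * sin u3)"
    using T3(2) T1(2) apply (rule pair_sin)
    using T3(3) T1(3) by (intro dir_sin[OF fr(3-5) dt td td]) auto
  have eq': "d1 * d2 * sin (dir_angle X Q1 P Q2) * l3 + d2 * d3 * sin (dir_angle X Q2 P Q3) * l1
             + d3 * d1 * sin (dir_angle X Q3 P Q1) * l2 = 0"
    using eq unfolding Let_def P_def[symmetric] Q1_def[symmetric] Q2_def[symmetric] Q3_def[symmetric]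
      d1_def[symmetric] d2_def[symmetric] d3_def[symmetric] l1_def[symmetric] l2_def[symmetric] l3_def[symmetric] .
  define a1 where "a1 = d1 * cos u1"
  define a2 where "a2 = d2 * cos u2"
  define a3 where "a3 = d3 * cos u3"
  define b1 where "b1 = d1 * sin u1"
  define b2 where "b2 = d2 * sin u2"
  define b3 where "b3 = d3 * sin u3"
  have "(a1*b2 - a2*b1) * l3 + (a2*b3 - a3*b2) * l1 + (a3*b1 - a1*b3) * l2 = 0"
    using eq' unfolding s12 s23 s31 a1_def a2_def a3_def b1_def b2_def b3_def .
  hence "det3 (vector [l1, a1, b1]) (vector [l2, a2, b2]) (vector [l3, a3, b3]) = 0"
    unfolding det3_def by (simp add: algebra_simps)
  then obtain al be ga where abc: "(al, be, ga) \<noteq> (0,0,0)"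
    and comb: "al *\<^sub>R vector [l1, a1, b1] + be *\<^sub>R vector [l2, a2, b2] + ga *\<^sub>R (vector [l3, a3, b3] :: real^3) = 0"
    using dep3 by blast
  have E: "al*l1 + be*l2 + ga*l3 = 0" "al*a1 + be*a2 + ga*a3 = 0" "al*b1 + be*b2 + ga*b3 = 0"
    using comb by (simp_all add: vec_eq_iff forall_3)
  define w1 where "w1 = fp *\<^sub>R (l1 *\<^sub>R P + a1 *\<^sub>R f2 + b1 *\<^sub>R f3)"
  define w2 where "w2 = fp *\<^sub>R (l2 *\<^sub>R P + a2 *\<^sub>R f2 + b2 *\<^sub>R f3)"
  define w3 where "w3 = fp *\<^sub>R (l3 *\<^sub>R P + a3 *\<^sub>R f2 + b3 *\<^sub>R f3)"
  have "al *\<^sub>R w1 + be *\<^sub>R w2 + ga *\<^sub>R w3 = fp *\<^sub>R ((al*l1 + be*l2 + ga*l3) *\<^sub>R P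
          + (al*a1 + be*a2 + ga*a3) *\<^sub>R f2 + (al*b1 + be*b2 + ga*b3) *\<^sub>R f3)"
    unfolding w1_def w2_def w3_def by (simp add: algebra_simps)
  hence lin: "al *\<^sub>R w1 + be *\<^sub>R w2 + ga *\<^sub>R w3 = 0" unfolding E by simp
  have "w1 \<in> trans_tangents X p e0" "w2 \<in> trans_tangents X p p2" "w3 \<in> trans_tangents X p p3"
    using T1(1) T2(1) T3(1) unfolding w1_def w2_def w3_def a1_def a2_def a3_def b1_def b2_def b3_def
    by auto
  thus ?thesis unfolding tl_surface_def using assms(3) abc lin by blast
qed

end
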